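(* Let $\lambda,\mu\in P^+$ and let $X\subseteq\mathcal{B}(\lambda)$ and $Y\subseteq\mathcal{B}(\mu)$ be extremal subsets. Then $X\otimes Y=\{x\otimes y: x\in X, y\in Y\}$ is an extremal subset of $\mathcal{B}(\lambda)\otimes\mathcal{B}(\mu)$ if and only if the following holds: for every $i\in I$ and every $x\otimes y\in X\otimes Y$ such that $e_i(x\otimes y)=e_i(x)\otimes y\neq 0$ and $f_i(x\otimes y)=x\otimes f_i(y)\neq 0$, we have $f_i(y)\in Y$.
   Context: Let $\mathfrak g$ be a complex semisimple Lie algebra with Dynkin index set $I$, weight lattice $P$, simple coroots $\alpha_i^\vee$, and dominant weights $P^+=\{\lambda\in P:\langle\alpha_i^\vee,\lambda\rangle\ge 0\ \forall i\in I\}$. For $\lambda\in P^+$, $\mathcal{B}(\lambda)$ denotes Kashiwara's crystal of the irreducible highest weight module of highest weight $\lambda$, with maps $\mathrm{wt}$, and $e_i,f_i:\mathcal{B}(\lambda)\to\mathcal{B}(\lambda)\sqcup\{0\}$, where $\varepsilon_i(b)=\max\{k\ge0: e_i^k(b)\ne0\}$ and $\varphi_i(b)=\max\{k\ge 0: f_i^k(b)\neq 0\}$. The tensor product crystal $\mathcal{B}(\lambda)\otimes\mathcal{B}(\mu)$ has elements $b_1\otimes b_2$ and operators: $e_i(b_1\otimes b_2)=e_i(b_1)\otimes b_2$ if $\varepsilon_i(b_2)\le\varphi_i(b_1)$ and $=b_1\otimes e_i(b_2)$ otherwise; $f_i(b_1\otimes b_2)=f_i(b_1)\otimes b_2$ if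 $\varepsilon_i(b_2)<\varphi_i(b_1)$ and $=b_1\otimes f_i(b_2)$ otherwise (with $0\otimes b=b\otimes 0=0$). An $i$-string of a crystal is a connected component of the graph whose edges are $b\to f_i(b)$ ($f_i(b)\ne 0$). A subset $X$ of a crystal $\mathcal{B}$ (here $\mathcal{B}(\lambda)$ or $\mathcal{B}(\lambda)\otimes\mathcal{B}(\mu)$) is extremal if $X$ is nonempty and for every $i\in I$ and every $i$-string $S$ of $\mathcal{B}$, $S\cap X$ is either $\varnothing$, or $S$, or $\{b\}$ where $b\in S$ satisfies $e_i(b)=0$. *)

theory Defs
  imports Main
begin

text \<open>Abstract (seminormal, Kashiwara-type) crystals: carrier B, Kashiwara operators
  e i, f i given as partial maps (None plays the role of 0).\<close>

fun iter_op :: "('a \<Rightarrow> 'a option) \<Rightarrow> nat \<Rightarrow> 'a \<Rightarrow> 'a option" where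
  "iter_op g 0 b = Some b"
| "iter_op g (Suc k) b = Option.bind (iter_op g k b) g"

definition crystal :: "'a set \<Rightarrow> ('i \<Rightarrow> 'a \<Rightarrow> 'a option) \<Rightarrow> ('i \<Rightarrow> 'a \<Rightarrow> 'a option) \<Rightarrow> bool" where
  "crystal B e f \<longleftrightarrow>
     (\<forall>i b b'. b \<in> B \<longrightarrow> e i b = Some b' \<longrightarrow> b' \<in> B) \<and>
     (\<forall>i b b'. b \<in> B \<longrightarrow> f i b = Some b' \<longrightarrow> b' \<in> B) \<and>
     (\<forall>i b b'. b \<in> B \<longrightarrow> b' \<in> B \<longrightarrow> (f i b = Some b' \<longleftrightarrow> e i b' = Some b)) \<and>
     (\<forall>i b. b \<in> B \<longrightarrow> (\<exists>k. iter_op (e i) k b = None) \<and> (\<exists>k. iter_op (f i) k b = None))"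

definition eps :: "('i \<Rightarrow> 'a \<Rightarrow> 'a option) \<Rightarrow> 'i \<Rightarrow> 'a \<Rightarrow> nat" where
  "eps e i b = (GREATEST k. iter_op (e i) k b \<noteq> None)"

definition phi :: "('i \<Rightarrow> 'a \<Rightarrow> 'a option) \<Rightarrow> 'i \<Rightarrow> 'a \<Rightarrow> nat" where
  "phi f i b = (GREATEST k. iter_op (f i) k b \<noteq> None)"

text \<open>Tensor product rule (Kashiwara convention as in the paper).\<close>
definition tens_e ::
  "('i \<Rightarrow> 'a \<Rightarrow> 'a option) \<Rightarrow> ('i \<Rightarrow> 'a \<Rightarrow> 'a option) \<Rightarrow>
   ('i \<Rightarrow> 'b \<Rightarrow> 'b option) \<Rightarrow> ('i \<Rightarrow> 'b \<Rightarrow> 'b option) \<Rightarrow> 'i \<Rightarrow> 'a \<times> 'b \<Rightarrow> ('a \<times> 'b) option" where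
  "tens_e e1 f1 e2 f2 i p = (case p of (b1, b2) \<Rightarrow>
     if eps e2 i b2 \<le> phi f1 i b1 then map_option (\<lambda>x. (x, b2)) (e1 i b1)
     else map_option (\<lambda>y. (b1, y)) (e2 i b2))"

definition tens_f ::
  "('i \<Rightarrow> 'a \<Rightarrow> 'a option) \<Rightarrow> ('i \<Rightarrow> 'a \<Rightarrow> 'a option) \<Rightarrow>
   ('i \<Rightarrow> 'b \<Rightarrow> 'b option) \<Rightarrow> ('i \<Rightarrow> 'b \<Rightarrow> 'b option) \<Rightarrow> 'i \<Rightarrow> 'a \<times> 'b \<Rightarrow> ('a \<times> 'b) option" where
  "tens_f e1 f1 e2 f2 i p = (case p of (b1, b2) \<Rightarrow>
     if eps e2 i b2 < phi f1 i b1 then map_option (\<lambda>x. (x, b2)) (f1 i b1)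
     else map_option (\<lambda>y. (b1, y)) (f2 i b2))"

definition f_edges :: "'a set \<Rightarrow> ('i \<Rightarrow> 'a \<Rightarrow> 'a option) \<Rightarrow> 'i \<Rightarrow> ('a \<times> 'a) set" where
  "f_edges B f i = {(x, y). x \<in> B \<and> f i x = Some y}"

definition i_string :: "'a set \<Rightarrow> ('i \<Rightarrow> 'a \<Rightarrow> 'a option) \<Rightarrow> 'i \<Rightarrow> 'a \<Rightarrow> 'a set" where
  "i_string B f i b = {c. (b, c) \<in> (f_edges B f i \<union> (f_edges B f i)\<inverse>)\<^sup>*}"

definition i_strings :: "'a set \<Rightarrow> ('i \<Rightarrow> 'a \<Rightarrow> 'a option) \<Rightarrow> 'i \<Rightarrow> 'a set set" where
  "i_strings B f i = i_string B f i ` B"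

definition extremal :: "'a set \<Rightarrow> ('i \<Rightarrow> 'a \<Rightarrow> 'a option) \<Rightarrow> ('i \<Rightarrow> 'a \<Rightarrow> 'a option) \<Rightarrow> 'a set \<Rightarrow> bool" where
  "extremal B e f X \<longleftrightarrow> X \<noteq> {} \<and> X \<subseteq> B \<and>
     (\<forall>i. \<forall>S \<in> i_strings B f i.
        S \<inter> X = {} \<or> S \<inter> X = S \<or> (\<exists>b \<in> S. e i b = None \<and> S \<inter> X = {b}))"

end

theory Submission
  imports Defs
begin

lemma cr_e_closed: "crystal B e f \<Longrightarrow> b \<in> B \<Longrightarrow> e i b = Some c \<Longrightarrow> c \<in> B"
  unfolding crystal_def by meson
lemma cr_f_closed: "crystal B e f \<Longrightarrow> b \<in> B \<Longrightarrow> f i b = Some c \<Longrightarrow> c \<in> B"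
  unfolding crystal_def by meson
lemma cr_fe: "crystal B e f \<Longrightarrow> b \<in> B \<Longrightarrow> c \<in> B \<Longrightarrow> f i b = Some c \<longleftrightarrow> e i c = Some b"
  unfolding crystal_def by meson
lemma cr_term_e: "crystal B e f \<Longrightarrow> b \<in> B \<Longrightarrow> \<exists>k. iter_op (e i) k b = None"
  unfolding crystal_def by meson
lemma cr_term_f: "crystal B e f \<Longrightarrow> b \<in> B \<Longrightarrow> \<exists>k. iter_op (f i) k b = None"
  unfolding crystal_def by meson

lemma iter_suc: "iter_op g (Suc k) b = Option.bind (g b) (iter_op g k)"
  by (induction k) (auto split: option.splits)

lemma iter_mono: "iter_op g k b = None \<Longrightarrow> k \<le> m \<Longrightarrow> iter_op g m b = None"
proof (induction m)
  case 0 then show ?case by simp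
next
  case (Suc m)
  show ?case
  proof (cases "k = Suc m")
    case True then show ?thesis using Suc.prems by simp
  next
    case False then have "iter_op g m b = None" using Suc by simp
    then show ?thesis by simp
  qed
qed

lemma greatest_shift:
  assumes gb: "g b = Some b'" and N: "iter_op g N b' = None"
  shows "(GREATEST k. iter_op g k b \<noteq> None) = Suc (GREATEST k. iter_op g k b' \<noteq> None)"
proof -
  have bnd: "\<And>y. iter_op g y b' \<noteq> None \<Longrightarrow> y \<le> N"
  proof -
    fix y assume "iter_op g y b' \<noteq> None"
    then have "\<not> N \<le> y" using iter_mono[OF N, of y] by auto
    then show "y \<le> N" by simp
  qed
  have P0: "iter_op g 0 b' \<noteq> None" by simp
  define n where "n = (GREATEST k. iter_op g k b' \<noteq> None)"
  have Pn: "iter_op g n b' \<noteq> None" unfolding n_def by (rule GreatestI_nat[where P="\<lambda>k. iter_op g k b' \<noteq> None", OF P0 bnd])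
  have le: "\<And>y. iter_op g y b' \<noteq> None \<Longrightarrow> y \<le> n"
  proof -
    fix y assume Py: "iter_op g y b' \<noteq> None"
    show "y \<le> n" unfolding n_def
      by (rule Greatest_le_nat[where P="\<lambda>k. iter_op g k b' \<noteq> None", OF Py bnd])
  qed
  show ?thesis unfolding n_def[symmetric]
  proof (rule Greatest_equality)
    show "iter_op g (Suc n) b \<noteq> None" unfolding iter_suc using Pn gb by simp
  next
    fix y assume H: "iter_op g y b \<noteq> None"
    show "y \<le> Suc n"
    proof (cases y)
      case 0 then show ?thesis by simp
    next
      case (Suc z)
      then have "iter_op g (Suc z) b \<noteq> None" using H by simp
      then have "iter_op g z b' \<noteq> None" unfolding iter_suc using gb by simp
      then have "z \<le> n" by (rule le)
      then show ?thesis using Suc by simp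
    qed
  qed
qed

lemma phi_f: "crystal B e f \<Longrightarrow> b \<in> B \<Longrightarrow> f i b = Some b' \<Longrightarrow> phi f i b = Suc (phi f i b')"
proof -
  assume c: "crystal B e f" and b: "b \<in> B" and fb: "f i b = Some b'"
  have b': "b' \<in> B" using cr_f_closed[OF c b fb] .
  obtain N where "iter_op (f i) N b' = None" using cr_term_f[OF c b'] by blast
  then show ?thesis unfolding phi_def by (rule greatest_shift[where g="f i", OF fb])
qed

lemma eps_f:
  assumes c: "crystal B e f" and b: "b \<in> B" and fb: "f i b = Some b'"
  shows "eps e i b' = Suc (eps e i b)"
proof -
  have b': "b' \<in> B" by (rule cr_f_closed[OF c b fb])
  have eb: "e i b' = Some b" using cr_fe[OF c b b', of i] fb by (rule iffD1)
  obtain N where N: "iter_op (e i) N b = None" using cr_term_e[OF c b, of i] by (elim exE)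
  show ?thesis unfolding eps_def by (rule greatest_shift[where g="e i", OF eb N])
qed

lemma local_to_string:
  assumes clo: "\<And>b c. b \<in> B \<Longrightarrow> f i b = Some c \<Longrightarrow> c \<in> B"
    and inv: "\<And>b c. b \<in> B \<Longrightarrow> c \<in> B \<Longrightarrow> f i b = Some c \<Longrightarrow> e i c = Some b"
    and XB: "X \<subseteq> B"
    and L1: "\<And>b b'. b \<in> X \<Longrightarrow> e i b = Some b' \<Longrightarrow> b' \<in> X"
    and L2: "\<And>b c. b \<in> X \<Longrightarrow> e i b \<noteq> None \<Longrightarrow> f i b = Some c \<Longrightarrow> c \<in> X"
    and S: "S \<in> i_strings B f i"
  shows "S \<inter> X = {} \<or> S \<inter> X = S \<or> (\<exists>b \<in> S. e i b = None \<and> S \<inter> X = {b})"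
proof -
  let ?R = "f_edges B f i \<union> (f_edges B f i)\<inverse>"
  obtain b0 where b0: "b0 \<in> B" and Sd: "S = i_string B f i b0"
    using S unfolding i_strings_def by blast
  have symR: "sym (?R\<^sup>*)" by (simp add: sym_Un_converse sym_rtrancl)
  have conn: "\<And>c d. c \<in> S \<Longrightarrow> d \<in> S \<Longrightarrow> (c, d) \<in> ?R\<^sup>*"
  proof -
    fix c d assume "c \<in> S" "d \<in> S"
    then have "(b0, c) \<in> ?R\<^sup>*" "(b0, d) \<in> ?R\<^sup>*" using Sd unfolding i_string_def by auto
    then have "(c, b0) \<in> ?R\<^sup>*" "(b0, d) \<in> ?R\<^sup>*" using symR by (auto dest: symD)
    then show "(c, d) \<in> ?R\<^sup>*" by (rule rtrancl_trans)
  qed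
  show ?thesis
  proof (cases "\<exists>b \<in> S \<inter> X. e i b \<noteq> None")
    case True
    then obtain b where bS: "b \<in> S" and bX: "b \<in> X" and eb: "e i b \<noteq> None" by blast
    have all: "\<And>c. (b, c) \<in> ?R\<^sup>* \<Longrightarrow> c \<in> X \<and> (\<forall>d. f i c = Some d \<longrightarrow> d \<in> X)"
    proof -
      fix c assume "(b, c) \<in> ?R\<^sup>*"
      then show "c \<in> X \<and> (\<forall>d. f i c = Some d \<longrightarrow> d \<in> X)"
      proof (induction rule: rtrancl_induct)
        case base
        have "\<forall>d. f i b = Some d \<longrightarrow> d \<in> X"
        proof (intro allI impI)
          fix d assume "f i b = Some d"
          then show "d \<in> X" by (rule L2[OF bX eb])
        qed
        then show ?case using bX by (rule conjI[rotated])
      next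
        case (step c d)
        from step.hyps(2) show ?case
        proof
          assume "(c, d) \<in> f_edges B f i"
          then have cB: "c \<in> B" and fc: "f i c = Some d" unfolding f_edges_def by auto
          have dX: "d \<in> X" using step.IH fc by simp
          have "e i d = Some c" using inv[OF cB clo[OF cB fc] fc] .
          then have ed: "e i d \<noteq> None" by simp
          have "\<forall>d'. f i d = Some d' \<longrightarrow> d' \<in> X"
          proof (intro allI impI)
            fix d' assume "f i d = Some d'"
            then show "d' \<in> X" by (rule L2[OF dX ed])
          qed
          then show ?case using dX by simp
        next
          assume "(c, d) \<in> (f_edges B f i)\<inverse>"
          then have dB: "d \<in> B" and fd: "f i d = Some c" unfolding f_edges_def by auto
          have cX: "c \<in> X" using step.IH by simp
          have cB: "c \<in> B" using cX XB by (rule subsetD[rotated])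
          have "e i c = Some d" by (rule inv[OF dB cB fd])
          then have "d \<in> X" by (rule L1[OF cX])
          then show ?case using fd cX by simp
        qed
      qed
    qed
    have "S \<subseteq> X"
    proof
      fix c assume "c \<in> S"
      then show "c \<in> X" using all[OF conn[OF bS]] by blast
    qed
    then show ?thesis by blast
  next
    case False
    show ?thesis
    proof (cases "S \<inter> X = {}")
      case True then show ?thesis by blast
    next
      case nE: False
      then obtain t where tS: "t \<in> S" and tX: "t \<in> X" by blast
      have et: "e i t = None" using False tS tX by blast
      have tB: "t \<in> B" using tX XB by blast
      have itB: "\<And>k c. iter_op (f i) k t = Some c \<Longrightarrow> c \<in> B"
      proof -
        fix k c show "iter_op (f i) k t = Some c \<Longrightarrow> c \<in> B"
        proof (induction k arbitrary: c)
          case 0 then show ?case using tB by simp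
        next
          case (Suc k)
          then obtain c0 where "iter_op (f i) k t = Some c0" "f i c0 = Some c"
            by (cases "iter_op (f i) k t") auto
          then show ?case using Suc.IH clo by blast
        qed
      qed
      have reach: "\<And>c. (t, c) \<in> ?R\<^sup>* \<Longrightarrow> \<exists>k. iter_op (f i) k t = Some c"
      proof -
        fix c assume "(t, c) \<in> ?R\<^sup>*"
        then show "\<exists>k. iter_op (f i) k t = Some c"
        proof (induction rule: rtrancl_induct)
          case base then show ?case by (rule exI[of _ 0]) simp
        next
          case (step c d)
          then obtain k where k: "iter_op (f i) k t = Some c" by blast
          have cB: "c \<in> B" using itB k .
          from step.hyps(2) show ?case
          proof
            assume "(c, d) \<in> f_edges B f i"
            then have "f i c = Some d" unfolding f_edges_def by auto
            then show ?case using k by (intro exI[of _ "Suc k"]) simp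
          next
            assume "(c, d) \<in> (f_edges B f i)\<inverse>"
            then have dB: "d \<in> B" and fd: "f i d = Some c" unfolding f_edges_def by auto
            have ec: "e i c = Some d" using inv[OF dB cB fd] .
            show ?case
            proof (cases k)
              case 0 then show ?thesis using k ec et by simp
            next
              case (Suc m)
              then obtain c0 where c0: "iter_op (f i) m t = Some c0" "f i c0 = Some c"
                using k by (cases "iter_op (f i) m t") auto
              have "e i c = Some c0" using inv[OF itB[OF c0(1)] cB c0(2)] .
              then have "c0 = d" using ec by simp
              then show ?thesis using c0 by blast
            qed
          qed
        qed
      qed
      have "S \<inter> X = {t}"
      proof (rule ccontr)
        assume "S \<inter> X \<noteq> {t}"
        then obtain t' where t'S: "t' \<in> S" and t'X: "t' \<in> X" and ne: "t' \<noteq> t" using tS tX by blast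
        have et': "e i t' = None" using False t'S t'X by blast
        obtain k where k: "iter_op (f i) k t = Some t'" using reach conn[OF tS t'S] by blast
        show False
        proof (cases k)
          case 0 then show ?thesis using k ne by simp
        next
          case (Suc m)
          then obtain c0 where c0: "iter_op (f i) m t = Some c0" "f i c0 = Some t'"
            using k by (cases "iter_op (f i) m t") auto
          have "e i t' = Some c0" using inv[OF itB[OF c0(1)] itB[OF k] c0(2)] .
          then show False using et' by simp
        qed
      qed
      then show ?thesis using tS et by blast
    qed
  qed
qed

lemma ext_fwd:
  assumes "extremal B e f X" and "b \<in> X" and "f i b = Some c" and "e i b \<noteq> None"
  shows "c \<in> X"
proof -
  have bB: "b \<in> B" using assms(1,2) unfolding extremal_def by blast
  let ?S = "i_string B f i b"
  have S: "?S \<in> i_strings B f i" using bB unfolding i_strings_def by blast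
  have bS: "b \<in> ?S" unfolding i_string_def by simp
  have cS: "c \<in> ?S" unfolding i_string_def f_edges_def using bB assms(3) by auto
  have all: "\<forall>S \<in> i_strings B f i. S \<inter> X = {} \<or> S \<inter> X = S \<or> (\<exists>b \<in> S. e i b = None \<and> S \<inter> X = {b})"
    using assms(1) unfolding extremal_def by (elim conjE allE)
  have D: "?S \<inter> X = {} \<or> ?S \<inter> X = ?S \<or> (\<exists>b \<in> ?S. e i b = None \<and> ?S \<inter> X = {b})"
    using all S by (rule bspec)
  have bSX: "b \<in> ?S \<inter> X" using bS assms(2) by (rule IntI)
  have ebn: "e i b \<noteq> None" using assms(4) by simp
  show ?thesis
  proof (rule disjE[OF D])
    assume "?S \<inter> X = {}" then show ?thesis using bSX by simp
  next
    assume "?S \<inter> X = ?S \<or> (\<exists>b \<in> ?S. e i b = None \<and> ?S \<inter> X = {b})"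
    then show ?thesis
    proof
      assume "?S \<inter> X = ?S" then show ?thesis using cS by blast
    next
      assume "\<exists>t \<in> ?S. e i t = None \<and> ?S \<inter> X = {t}"
      then obtain t where "e i t = None" "?S \<inter> X = {t}" by blast
      then have "b = t" using bSX by simp
      then show ?thesis using ebn \<open>e i t = None\<close> by simp
    qed
  qed
qed

lemma ext_bwd:
  assumes "extremal B e f X" and "crystal B e f" and "b \<in> X" and "e i b = Some c"
  shows "c \<in> X"
proof -
  have bB: "b \<in> B" using assms(1,3) unfolding extremal_def by blast
  have cB: "c \<in> B" using cr_e_closed[OF assms(2) bB assms(4)] .
  have fc: "f i c = Some b" using cr_fe[OF assms(2) cB bB] assms(4) by simp
  let ?S = "i_string B f i b"
  have S: "?S \<in> i_strings B f i" using bB unfolding i_strings_def by blast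
  have bS: "b \<in> ?S" unfolding i_string_def by simp
  have cS: "c \<in> ?S" unfolding i_string_def f_edges_def using cB fc by auto
  have all: "\<forall>S \<in> i_strings B f i. S \<inter> X = {} \<or> S \<inter> X = S \<or> (\<exists>b \<in> S. e i b = None \<and> S \<inter> X = {b})"
    using assms(1) unfolding extremal_def by (elim conjE allE)
  have D: "?S \<inter> X = {} \<or> ?S \<inter> X = ?S \<or> (\<exists>b \<in> ?S. e i b = None \<and> ?S \<inter> X = {b})"
    using all S by (rule bspec)
  have bSX: "b \<in> ?S \<inter> X" using bS assms(3) by (rule IntI)
  have ebn: "e i b \<noteq> None" using assms(4) by simp
  show ?thesis
  proof (rule disjE[OF D])
    assume "?S \<inter> X = {}" then show ?thesis using bSX by simp
  next
    assume "?S \<inter> X = ?S \<or> (\<exists>b \<in> ?S. e i b = None \<and> ?S \<inter> X = {b})"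
    then show ?thesis
    proof
      assume "?S \<inter> X = ?S" then show ?thesis using cS by blast
    next
      assume "\<exists>t \<in> ?S. e i t = None \<and> ?S \<inter> X = {t}"
      then obtain t where "e i t = None" "?S \<inter> X = {t}" by blast
      then have "b = t" using bSX by simp
      then show ?thesis using ebn \<open>e i t = None\<close> by simp
    qed
  qed
qed

theorem theorem1p1:
  fixes B1 :: "'a set" and e1 f1 :: "'i \<Rightarrow> 'a \<Rightarrow> 'a option"
    and B2 :: "'b set" and e2 f2 :: "'i \<Rightarrow> 'b \<Rightarrow> 'b option"
    and X :: "'a set" and Y :: "'b set"
  assumes "crystal B1 e1 f1" and "crystal B2 e2 f2"
    and "extremal B1 e1 f1 X" and "extremal B2 e2 f2 Y"
  shows "extremal (B1 \<times> B2) (tens_e e1 f1 e2 f2) (tens_f e1 f1 e2 f2) (X \<times> Y) \<longleftrightarrow>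
    (\<forall>i x y x' y'. x \<in> X \<longrightarrow> y \<in> Y \<longrightarrow>
        e1 i x = Some x' \<longrightarrow> tens_e e1 f1 e2 f2 i (x, y) = Some (x', y) \<longrightarrow>
        f2 i y = Some y' \<longrightarrow> tens_f e1 f1 e2 f2 i (x, y) = Some (x, y') \<longrightarrow>
        y' \<in> Y)"
proof
  assume ext: "extremal (B1 \<times> B2) (tens_e e1 f1 e2 f2) (tens_f e1 f1 e2 f2) (X \<times> Y)"
  show "\<forall>i x y x' y'. x \<in> X \<longrightarrow> y \<in> Y \<longrightarrow>
        e1 i x = Some x' \<longrightarrow> tens_e e1 f1 e2 f2 i (x, y) = Some (x', y) \<longrightarrow>
        f2 i y = Some y' \<longrightarrow> tens_f e1 f1 e2 f2 i (x, y) = Some (x, y') \<longrightarrow>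
        y' \<in> Y"
  proof (intro allI impI)
    fix i x y x' y'
    assume "x \<in> X" "y \<in> Y" "tens_e e1 f1 e2 f2 i (x, y) = Some (x', y)"
      "tens_f e1 f1 e2 f2 i (x, y) = Some (x, y')"
    then have "(x, y') \<in> X \<times> Y" using ext_fwd[OF ext, of "(x,y)" i "(x,y')"] by auto
    then show "y' \<in> Y" by simp
  qed
next
  assume H: "\<forall>i x y x' y'. x \<in> X \<longrightarrow> y \<in> Y \<longrightarrow>
        e1 i x = Some x' \<longrightarrow> tens_e e1 f1 e2 f2 i (x, y) = Some (x', y) \<longrightarrow>
        f2 i y = Some y' \<longrightarrow> tens_f e1 f1 e2 f2 i (x, y) = Some (x, y') \<longrightarrow>
        y' \<in> Y"
  note c1 = assms(1) and c2 = assms(2) and x1 = assms(3) and x2 = assms(4)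
  let ?E = "tens_e e1 f1 e2 f2" and ?F = "tens_f e1 f1 e2 f2"
  have XB: "X \<subseteq> B1" "X \<noteq> {}" using x1 unfolding extremal_def by auto
  have YB: "Y \<subseteq> B2" "Y \<noteq> {}" using x2 unfolding extremal_def by auto
  have "\<forall>S \<in> i_strings (B1 \<times> B2) ?F i.
        S \<inter> (X \<times> Y) = {} \<or> S \<inter> (X \<times> Y) = S \<or> (\<exists>b \<in> S. ?E i b = None \<and> S \<inter> (X \<times> Y) = {b})" for i
  proof
    fix S assume S: "S \<in> i_strings (B1 \<times> B2) ?F i"
    show "S \<inter> (X \<times> Y) = {} \<or> S \<inter> (X \<times> Y) = S \<or> (\<exists>b \<in> S. ?E i b = None \<and> S \<inter> (X \<times> Y) = {b})"
    proof (rule local_to_string[OF _ _ _ _ _ S])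
      fix b c assume "b \<in> B1 \<times> B2" "?F i b = Some c"
      then show "c \<in> B1 \<times> B2" unfolding tens_f_def
        using cr_f_closed[OF c1] cr_f_closed[OF c2]
        by (auto split: prod.splits if_splits)
    next
      fix b c assume bB: "b \<in> B1 \<times> B2" and "c \<in> B1 \<times> B2" and Fb: "?F i b = Some c"
      obtain b1 b2 where bb: "b = (b1, b2)" by (cases b)
      have b1: "b1 \<in> B1" and b2: "b2 \<in> B2" using bB bb by auto
      show "?E i c = Some b"
      proof (cases "eps e2 i b2 < phi f1 i b1")
        case True
        then obtain b1' where fb1: "f1 i b1 = Some b1'" and cc: "c = (b1', b2)"
          using Fb bb unfolding tens_f_def by auto
        have "phi f1 i b1 = Suc (phi f1 i b1')" using phi_f[OF c1 b1 fb1] .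
        moreover have "e1 i b1' = Some b1"
          using cr_fe[OF c1 b1 cr_f_closed[OF c1 b1 fb1]] fb1 by simp
        ultimately show ?thesis using True cc bb unfolding tens_e_def by auto
      next
        case False
        then obtain b2' where fb2: "f2 i b2 = Some b2'" and cc: "c = (b1, b2')"
          using Fb bb unfolding tens_f_def by auto
        have "eps e2 i b2' = Suc (eps e2 i b2)" using eps_f[OF c2 b2 fb2] .
        moreover have "e2 i b2' = Some b2"
          using cr_fe[OF c2 b2 cr_f_closed[OF c2 b2 fb2]] fb2 by simp
        ultimately show ?thesis using False cc bb unfolding tens_e_def by auto
      qed
    next
      show "X \<times> Y \<subseteq> B1 \<times> B2" using XB YB by auto
    next
      fix b b' assume bX: "b \<in> X \<times> Y" and Eb: "?E i b = Some b'"
      obtain x y where bb: "b = (x, y)" by (cases b)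
      show "b' \<in> X \<times> Y"
      proof (cases "eps e2 i y \<le> phi f1 i x")
        case True
        then obtain x' where "e1 i x = Some x'" "b' = (x', y)" using Eb bb unfolding tens_e_def by auto
        then show ?thesis using ext_bwd[OF x1 c1] bX bb by auto
      next
        case False
        then obtain y' where "e2 i y = Some y'" "b' = (x, y')" using Eb bb unfolding tens_e_def by auto
        then show ?thesis using ext_bwd[OF x2 c2] bX bb by auto
      qed
    next
      fix b c assume bX: "b \<in> X \<times> Y" and Eb: "?E i b \<noteq> None" and Fb: "?F i b = Some c"
      obtain x y where bb: "b = (x, y)" by (cases b)
      have xX: "x \<in> X" and yY: "y \<in> Y" using bX bb by auto
      show "c \<in> X \<times> Y"
      proof (cases "eps e2 i y \<le> phi f1 i x")
        case Ele: True
        then obtain x' where ex: "e1 i x = Some x'" and Exy: "?E i (x, y) = Some (x', y)"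
          using Eb bb unfolding tens_e_def by auto
        show ?thesis
        proof (cases "eps e2 i y < phi f1 i x")
          case True
          then obtain x'' where "f1 i x = Some x''" "c = (x'', y)" using Fb bb unfolding tens_f_def by auto
          then show ?thesis using ext_fwd[OF x1 xX, of i x''] ex yY by auto
        next
          case False
          then obtain y' where fy: "f2 i y = Some y'" and cc: "c = (x, y')"
            using Fb bb unfolding tens_f_def by auto
          then have "?F i (x, y) = Some (x, y')" using Fb bb by simp
          then have "y' \<in> Y" using H xX yY ex Exy fy by blast
          then show ?thesis using cc xX by simp
        qed
      next
        case False
        then have ey: "e2 i y \<noteq> None" using Eb bb unfolding tens_e_def by auto
        from False obtain y' where "f2 i y = Some y'" "c = (x, y')"
          using Fb bb unfolding tens_f_def by auto
        then show ?thesis using ext_fwd[OF x2 yY, of i y'] ey xX by auto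
      qed
    qed
  qed
  then show "extremal (B1 \<times> B2) ?E ?F (X \<times> Y)"
    unfolding extremal_def using XB YB by blast
qed

end
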